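(* Assume $\mathcal{Z}$ is norm-Euclidean. Then there is a constant $L>1$ such that for every digit string $s$ with $C_s$ nonempty, $\sup_{y\in T^{|s|}C_s}\omega_s(y)\le L\inf_{y\in T^{|s|}C_s}\omega_s(y)$.
   Context: $X=\mathbb{R}^d$ (including $\mathbb{C},\mathbb{H},\mathbb{O}$ as $\mathbb{R}^2,\mathbb{R}^4,\mathbb{R}^8$) with Euclidean norm and distance. $\iota:X\setminus\{0\}\to X\setminus\{0\}$ satisfies $|\iota x|=1/|x|$, $d(\iota x,\iota y)=d(x,y)/(|x||y|)$ and $\iota\circ\iota=\mathrm{id}$; $\iota(0)=0$. $\mathcal{Z}$ is a discrete additive subgroup with compact quotient, $K=\{x:d(x,0)\le d(x,z)\ \forall z\in\mathcal{Z}\}$ its Dirichlet region with a boundary choice so that each $x$ has a unique $[x]\in\mathcal{Z}$ with $x-[x]\in K$; norm-Euclidean means $\operatorname{rad}(K)=\sup_{x\in K}|x|<1$. $Tx=\iota x-[\iota x]$ ($x\ne0$), $T0=0$. Cylinders: $C_\emptyset=K$, $C_{as}=K\cap\iota(C_s+a)$. For $s=a_1\dots a_n$, $T_s=T_{a_n}\circ\cdots\circ T_{a_1}$ on $C_s$ with $T_a(x)=\iota x-a$, and $\omega_s(y)=|\det DT_s^{-1}(y)|$ with $T_s^{-1}=T_{a_1}^{-1}\circ\cdots\circ T_{a_n}^{-1}$, $T_a^{-1}(y)=\iota(y+a)$. *)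

theory Defs
  imports "HOL-Analysis.Analysis" "HOL-Library.Extended_Real"
begin

text \<open>The ambient space X = R^d is modelled as real^'n (d = CARD('n)).\<close>

definition inversion :: "(real^'n \<Rightarrow> real^'n) \<Rightarrow> bool" where
  "inversion \<iota> \<longleftrightarrow> \<iota> 0 = 0 \<and>
     (\<forall>x. x \<noteq> 0 \<longrightarrow> norm (\<iota> x) = 1 / norm x \<and> \<iota> (\<iota> x) = x) \<and>
     (\<forall>x y. x \<noteq> 0 \<longrightarrow> y \<noteq> 0 \<longrightarrow> dist (\<iota> x) (\<iota> y) = dist x y / (norm x * norm y))"

definition cocompact_lattice :: "(real^'n) set \<Rightarrow> bool" where
  "cocompact_lattice Z \<longleftrightarrow> 0 \<in> Z \<and> (\<forall>x\<in>Z. \<forall>y\<in>Z. x + y \<in> Z \<and> - x \<in> Z) \<and>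
     (\<exists>e>0. \<forall>z\<in>Z. z \<noteq> 0 \<longrightarrow> e \<le> norm z) \<and>
     (\<exists>C. compact C \<and> (\<forall>x. \<exists>z\<in>Z. x - z \<in> C))"

definition dirichlet :: "(real^'n) set \<Rightarrow> (real^'n) set" where
  "dirichlet Z = {x. \<forall>z\<in>Z. dist x 0 \<le> dist x z}"

text \<open>K is the Dirichlet region with a boundary choice: a subset of the closed
  Dirichlet region such that every x has a unique [x] in Z with x - [x] in K.\<close>
definition dirichlet_domain :: "(real^'n) set \<Rightarrow> (real^'n) set \<Rightarrow> bool" where
  "dirichlet_domain Z K \<longleftrightarrow> K \<subseteq> dirichlet Z \<and> (\<forall>x. \<exists>!z. z \<in> Z \<and> x - z \<in> K)"

definition lat_floor :: "(real^'n) set \<Rightarrow> (real^'n) set \<Rightarrow> real^'n \<Rightarrow> real^'n" where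
  "lat_floor Z K x = (THE z. z \<in> Z \<and> x - z \<in> K)"

definition rad :: "(real^'n) set \<Rightarrow> real" where
  "rad K = (SUP x\<in>K. norm x)"

definition Tmap :: "(real^'n \<Rightarrow> real^'n) \<Rightarrow> (real^'n) set \<Rightarrow> (real^'n) set \<Rightarrow> real^'n \<Rightarrow> real^'n" where
  "Tmap \<iota> Z K x = (if x = 0 then 0 else \<iota> x - lat_floor Z K (\<iota> x))"

fun cyl :: "(real^'n \<Rightarrow> real^'n) \<Rightarrow> (real^'n) set \<Rightarrow> (real^'n) list \<Rightarrow> (real^'n) set" where
  "cyl \<iota> K [] = K"
| "cyl \<iota> K (a # s) = K \<inter> \<iota> ` ((\<lambda>x. x + a) ` cyl \<iota> K s)"

text \<open>T_s^{-1} = T_{a_1}^{-1} o ... o T_{a_n}^{-1}, with T_a^{-1}(y) = iota (y + a).\<close>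
definition Tinv :: "(real^'n \<Rightarrow> real^'n) \<Rightarrow> (real^'n) list \<Rightarrow> real^'n \<Rightarrow> real^'n" where
  "Tinv \<iota> s y = foldr (\<lambda>a y. \<iota> (y + a)) s y"

definition omega :: "(real^'n \<Rightarrow> real^'n) \<Rightarrow> (real^'n) list \<Rightarrow> real^'n \<Rightarrow> real" where
  "omega \<iota> s y = \<bar>det (matrix (frechet_derivative (Tinv \<iota> s) (at y)))\<bar>"

end

theory Submission
  imports Defs
begin


lemma inv_norm: "inversion i \<Longrightarrow> x \<noteq> 0 \<Longrightarrow> norm (i x) = 1 / norm x"
  unfolding inversion_def by blast
lemma inv_inv: "inversion i \<Longrightarrow> i (i x) = x"
  unfolding inversion_def by (cases "x = 0") auto
lemma inv_zero: "inversion i \<Longrightarrow> i 0 = 0"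
  unfolding inversion_def by blast
lemma inv_zero_iff: "inversion i \<Longrightarrow> i x = 0 \<longleftrightarrow> x = 0"
  by (metis inv_inv inv_zero)
lemma inv_dist: "inversion i \<Longrightarrow> x \<noteq> 0 \<Longrightarrow> y \<noteq> 0 \<Longrightarrow> dist (i x) (i y) = dist x y / (norm x * norm y)"
  unfolding inversion_def by blast

definition Jm :: "real^'n \<Rightarrow> real^'n" where "Jm x = inverse (x \<bullet> x) *\<^sub>R x"

lemma Jm_norm: "x \<noteq> 0 \<Longrightarrow> norm (Jm x) = 1 / norm x"
  unfolding Jm_def by (simp add: power2_norm_eq_inner[symmetric] field_simps power2_eq_square)

lemma Jm_Jm: "Jm (Jm x) = x"
proof (cases "x = 0")
  case True then show ?thesis by (simp add: Jm_def)
next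
  case False
  have "Jm x \<bullet> Jm x = inverse (x \<bullet> x)"
    using False by (simp add: Jm_def field_simps)
  then show ?thesis using False by (simp add: Jm_def)
qed

lemma Jm_dist: "x \<noteq> 0 \<Longrightarrow> y \<noteq> 0 \<Longrightarrow> dist (Jm x) (Jm y) = dist x y / (norm x * norm y)"
proof -
  assume x: "x \<noteq> 0" and y: "y \<noteq> 0"
  have nx: "norm x > 0" "norm y > 0" using x y by auto
  define a where "a = x \<bullet> x"
  define b where "b = y \<bullet> y"
  define c where "c = x \<bullet> y"
  have a: "a > 0" "b > 0" using x y by (auto simp: a_def b_def)
  have "(dist (Jm x) (Jm y))^2 = (inverse a)^2 * a - 2 * inverse a * inverse b * c + (inverse b)^2 * b"
    unfolding dist_norm power2_norm_eq_inner Jm_def a_def[symmetric] b_def[symmetric]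
    by (simp add: inner_diff_left inner_diff_right a_def b_def c_def inner_commute power2_eq_square algebra_simps)
  also have "... = (a - 2 * c + b) / (a * b)" using a by (simp add: field_simps power2_eq_square)
  also have "a - 2 * c + b = (dist x y)^2"
    unfolding dist_norm power2_norm_eq_inner a_def b_def c_def
    by (simp add: inner_diff_left inner_diff_right inner_commute)
  also have "a * b = (norm x * norm y)^2"
    by (simp add: a_def b_def power2_norm_eq_inner[symmetric] power_mult_distrib)
  finally have "(dist (Jm x) (Jm y))^2 = (dist x y / (norm x * norm y))^2"
    by (simp add: power_divide)
  then show ?thesis using nx by (simp add: power2_eq_iff_nonneg)
qed

lemma Jm_deriv:
  assumes w: "w \<noteq> 0"
  shows "(Jm has_derivative (\<lambda>h. inverse (w \<bullet> w) *\<^sub>R h - (2 * (w \<bullet> h) / (w \<bullet> w)^2) *\<^sub>R w)) (at w)"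
proof -
  have ww: "w \<bullet> w \<noteq> 0" using w by simp
  have "((\<lambda>x. inverse (x \<bullet> x) *\<^sub>R x) has_derivative
     (\<lambda>h. inverse (w \<bullet> w) *\<^sub>R h - (2 * (w \<bullet> h) / (w \<bullet> w)^2) *\<^sub>R w)) (at w)"
    using ww
    apply (auto intro!: derivative_eq_intros ext)
    apply (simp add: field_simps power2_eq_square inner_commute algebra_simps)
    done
  then show ?thesis unfolding Jm_def[abs_def] .
qed

lemma Jm_deriv_norm:
  assumes w: "w \<noteq> 0"
  shows "norm (inverse (w \<bullet> w) *\<^sub>R h - (2 * (w \<bullet> h) / (w \<bullet> w)^2) *\<^sub>R w) = norm h / (norm w)^2"
proof -
  define a where "a = w \<bullet> w"
  define c where "c = w \<bullet> h"
  have a: "a > 0" using w by (simp add: a_def)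
  have "(norm (inverse a *\<^sub>R h - (2 * c / a^2) *\<^sub>R w))^2 = (inverse a)^2 * (h \<bullet> h) - 2 * inverse a * (2 * c / a^2) * c + (2 * c / a^2)^2 * a"
    unfolding power2_norm_eq_inner
    by (simp add: inner_diff_left inner_diff_right a_def c_def inner_commute power2_eq_square algebra_simps)
  also have "... = (h \<bullet> h) / a^2" using a by (simp add: field_simps power2_eq_square)
  also have "... = (norm h / (norm w)^2)^2"
    by (simp add: a_def power2_norm_eq_inner[symmetric] power_divide)
  finally show ?thesis unfolding a_def[symmetric] c_def[symmetric]
    by (simp add: power2_eq_iff_nonneg)
qed

lemma inv_deriv:
  fixes i :: "real^'n \<Rightarrow> real^'n"
  assumes inv: "inversion i" and w: "w \<noteq> 0"
  shows "\<exists>D. (i has_derivative D) (at w) \<and> (\<forall>h. norm (D h) = norm h / (norm w)^2)"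
proof -
  define A where "A x = i (Jm x)" for x
  have A0: "A 0 = 0" using inv by (simp add: A_def Jm_def inv_zero)
  have Jz: "Jm x = 0 \<longleftrightarrow> x = 0" for x :: "real^'n" by (metis Jm_Jm Jm_def scale_zero_right)
  have An: "norm (A x) = norm x" for x
  proof (cases "x = 0")
    case True then show ?thesis using A0 by simp
  next
    case False
    then show ?thesis using Jz[of x] by (simp add: A_def inv_norm[OF inv] Jm_norm)
  qed
  have Ad: "dist (A x) (A y) = dist x y" for x y
  proof (cases "x = 0 \<or> y = 0")
    case True then show ?thesis using A0 An by (auto simp: dist_norm norm_minus_commute)
  next
    case False
    then have "Jm x \<noteq> 0" "Jm y \<noteq> 0" using Jz by auto
    then show ?thesis using False
      by (simp add: A_def inv_dist[OF inv] Jm_dist Jm_norm)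
  qed
  have linA: "linear A" by (rule isometry_linear) (use A0 Ad in auto)
  have dA: "(A has_derivative A) (at (Jm w))" using linA by (simp add: linear_imp_has_derivative)
  have "((A \<circ> Jm) has_derivative (A \<circ> (\<lambda>h. inverse (w \<bullet> w) *\<^sub>R h - (2 * (w \<bullet> h) / (w \<bullet> w)^2) *\<^sub>R w))) (at w)"
    by (rule diff_chain_at[OF Jm_deriv[OF w] dA])
  then have "(i has_derivative (A \<circ> (\<lambda>h. inverse (w \<bullet> w) *\<^sub>R h - (2 * (w \<bullet> h) / (w \<bullet> w)^2) *\<^sub>R w))) (at w)"
    by (rule has_derivative_transform_within_open[where s="-{0}"]) (use w in \<open>auto simp: A_def Jm_Jm\<close>)
  then show ?thesis using Jm_deriv_norm[OF w] An by (auto simp: o_def)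
qed

lemma conf_det:
  fixes L :: "real^'n \<Rightarrow> real^'n"
  assumes lin: "linear L" and n: "\<And>h. norm (L h) = c * norm h" and c: "c > 0"
  shows "\<bar>det (matrix L)\<bar> = c ^ CARD('n)"
proof -
  define Q where "Q h = (1 / c) *\<^sub>R L h" for h
  have linQ: "linear Q" unfolding Q_def[abs_def] using lin by (intro linear_compose_scale_right) 
  have oQ: "orthogonal_transformation Q"
    unfolding orthogonal_transformation using linQ n c by (simp add: Q_def)
  have LQ: "L = (\<lambda>h. c *\<^sub>R h) \<circ> Q" using c by (auto simp: Q_def o_def)
  have "matrix L = matrix ((*\<^sub>R) c) ** matrix Q"
    unfolding LQ by (rule matrix_compose[OF linQ]) (simp add: linear_scaleR)
  then have "det (matrix L) = c ^ CARD('n) * det (matrix Q)"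
    by (simp add: det_mul)
  then show ?thesis using orthogonal_transformation_det[OF oQ] c by (simp add: abs_mult)
qed




lemma Tinv_Nil: "Tinv i [] y = y" by (simp add: Tinv_def)
lemma Tinv_Cons: "Tinv i (a # s) y = i (Tinv i s y + a)" by (simp add: Tinv_def)

locale S =
  fixes i :: "real^'n \<Rightarrow> real^'n" and Z K :: "(real^'n) set" and r :: real
  assumes inv: "inversion i"
    and Zadd: "\<And>x y. x \<in> Z \<Longrightarrow> y \<in> Z \<Longrightarrow> x + y \<in> Z"
    and Zneg: "\<And>x. x \<in> Z \<Longrightarrow> - x \<in> Z"
    and dd: "dirichlet_domain Z K"
    and Kr: "\<And>x. x \<in> K \<Longrightarrow> norm x \<le> r"
    and r0: "0 < r" and r1: "r < 1"
begin

abbreviation T where "T \<equiv> Tmap i Z K"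
abbreviation Dom where "Dom s \<equiv> (T ^^ length s) ` cyl i K s"

lemma Kmin: "x \<in> K \<Longrightarrow> z \<in> Z \<Longrightarrow> norm x \<le> dist x z"
  using dd unfolding dirichlet_domain_def dirichlet_def by auto

lemma K_neg: "u \<in> K \<Longrightarrow> a \<in> Z \<Longrightarrow> u + a = 0 \<Longrightarrow> u = 0 \<and> a = 0"
proof -
  assume u: "u \<in> K" and a: "a \<in> Z" and ua: "u + a = 0"
  have "u = - a" using ua by (simp add: eq_neg_iff_add_eq_0)
  then have "u \<in> Z" using Zneg[OF a] by simp
  then have "norm u \<le> 0" using Kmin[OF u] by fastforce
  then show ?thesis using ua by simp
qed

lemma floor_eq: "c \<in> K \<Longrightarrow> a \<in> Z \<Longrightarrow> lat_floor Z K (c + a) = a"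
proof -
  assume c: "c \<in> K" and a: "a \<in> Z"
  have ex: "\<exists>!z. z \<in> Z \<and> (c + a) - z \<in> K" using dd unfolding dirichlet_domain_def by blast
  show ?thesis unfolding lat_floor_def
    by (rule the1_equality[OF ex]) (use c a in auto)
qed

lemma cyl_K: "cyl i K s \<subseteq> K"
  by (cases s) auto

lemma T_step:
  assumes a: "a \<in> Z" and x: "x \<in> cyl i K (a # s)"
  shows "T x \<in> cyl i K s \<and> i (T x + a) = x"
proof -
  obtain c where c: "c \<in> cyl i K s" and xc: "x = i (c + a)" using x by auto
  have cK: "c \<in> K" using c cyl_K by blast
  show ?thesis
  proof (cases "c + a = 0")
    case True
    then have "c = 0" using K_neg[OF cK a] by blast
    moreover have "x = 0" using xc True inv_zero[OF inv] by simp
    ultimately show ?thesis using c xc by (simp add: Tmap_def)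
  next
    case False
    then have "x \<noteq> 0" using xc inv_zero_iff[OF inv] by simp
    moreover have "i x = c + a" using xc inv_inv[OF inv] by simp
    ultimately have "T x = c" by (simp add: Tmap_def floor_eq[OF cK a])
    then show ?thesis using c xc by simp
  qed
qed

lemma funpow_Suc': "(f ^^ Suc n) x = (f ^^ n) (f x)"
  by (metis comp_apply funpow_Suc_right)

lemma L1: "set s \<subseteq> Z \<Longrightarrow> x \<in> cyl i K s \<Longrightarrow> Tinv i s ((T ^^ length s) x) = x"
proof (induction s arbitrary: x)
  case Nil then show ?case by (simp add: Tinv_Nil)
next
  case (Cons a s)
  have st: "T x \<in> cyl i K s \<and> i (T x + a) = x" using T_step[of a x s] Cons.prems by auto
  then show ?case using Cons.IH[of "T x"] Cons.prems
    by (simp add: funpow_Suc' Tinv_Cons del: funpow.simps)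
qed

lemma Dom_cyl: "set s \<subseteq> Z \<Longrightarrow> y \<in> Dom s \<Longrightarrow> Tinv i s y \<in> cyl i K s"
  using L1 by auto

lemma Dom_Cons: "set (a # s) \<subseteq> Z \<Longrightarrow> Dom (a # s) \<subseteq> Dom s"
proof
  fix y assume s: "set (a # s) \<subseteq> Z" and y: "y \<in> Dom (a # s)"
  then obtain x where x: "x \<in> cyl i K (a # s)" and yx: "y = (T ^^ length (a # s)) x" by blast
  have "T x \<in> cyl i K s" using T_step[OF _ x] s by auto
  moreover have "y = (T ^^ length s) (T x)" using yx by (simp add: funpow_Suc' del: funpow.simps)
  ultimately show "y \<in> Dom s" by blast
qed

lemma cyl_app: "set s \<subseteq> Z \<Longrightarrow> x \<in> cyl i K (s @ t) \<Longrightarrow> (T ^^ length s) x \<in> cyl i K t"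
proof (induction s arbitrary: x)
  case Nil then show ?case by simp
next
  case (Cons a s)
  have "T x \<in> cyl i K (s @ t)" using T_step[of a x "s @ t"] Cons.prems by auto
  then show ?case using Cons.IH Cons.prems by (simp add: funpow_Suc' del: funpow.simps)
qed

lemma Dom_K: "set s \<subseteq> Z \<Longrightarrow> y \<in> Dom s \<Longrightarrow> y \<in> K"
  using cyl_app[of s _ "[]"] by auto

lemma L2: "set s \<subseteq> Z \<Longrightarrow> y \<in> Dom s \<Longrightarrow> Tinv i s y = 0 \<Longrightarrow> y = 0 \<and> set s \<subseteq> {0}"
proof (induction s)
  case Nil then show ?case by (simp add: Tinv_Nil)
next
  case (Cons a s)
  have y: "y \<in> Dom s" using Dom_Cons Cons.prems by blast
  have "Tinv i s y + a = 0" using Cons.prems(3) inv_zero_iff[OF inv] by (simp add: Tinv_Cons)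
  moreover have "Tinv i s y \<in> K" using Dom_cyl[OF _ y] Cons.prems cyl_K by auto
  ultimately have "Tinv i s y = 0 \<and> a = 0" using K_neg Cons.prems by auto
  then show ?case using Cons.IH y Cons.prems by auto
qed

lemma cyl0: "cyl i K [0] \<subseteq> {0}"
proof
  fix x assume "x \<in> cyl i K [0]"
  then obtain c where x: "x \<in> K" and c: "c \<in> K" and xc: "x = i c" by auto
  show "x \<in> {0}"
  proof (cases "c = 0")
    case True then show ?thesis using xc inv_zero[OF inv] by simp
  next
    case False
    then have "norm x = 1 / norm c" using xc inv_norm[OF inv] by simp
    moreover have "norm x \<le> r" "norm c \<le> r" using Kr x c by auto
    moreover have "norm c > 0" using False by simp
    ultimately have "1 \<le> r * r" by (simp add: field_simps) (smt (verit) mult_mono norm_ge_zero)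
    moreover have "r * r < 1" using r0 r1 by (smt (verit) mult_less_cancel_right1)
    ultimately show ?thesis by simp
  qed
qed

lemma L3: assumes "set s \<subseteq> Z" "s \<noteq> []" "last s = 0" shows "Dom s \<subseteq> {0}"
proof
  fix y assume y: "y \<in> Dom s"
  obtain s' where s': "s = s' @ [0]" using assms by (metis append_butlast_last_id)
  obtain x where x: "x \<in> cyl i K s" and yx: "y = (T ^^ length s) x" using y by blast
  have "(T ^^ length s') x \<in> cyl i K [0]" using cyl_app[of s' x "[0]"] x assms(1) s' by auto
  then have "(T ^^ length s') x = 0" using cyl0 by blast
  then show "y \<in> {0}" using yx s' by (simp add: Tmap_def)
qed

end



primrec Fc :: "(real^'n \<Rightarrow> real^'n) \<Rightarrow> (real^'n) list \<Rightarrow> real^'n \<Rightarrow> real" where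
  "Fc i [] y = 1"
| "Fc i (a # s) y = Fc i s y / (norm (Tinv i s y + a))^2"

context S begin

definition E :: "nat \<Rightarrow> real" where "E n = 2 * r * (\<Sum>j<n. r ^ (2 * j))"

lemma E_Suc: "E (Suc n) = E n + 2 * r * r ^ (2 * n)"
  by (simp add: E_def algebra_simps)

lemma L4:
  "set s \<subseteq> Z \<Longrightarrow> (s = [] \<or> last s \<noteq> 0) \<Longrightarrow>
   (\<forall>y\<in>Dom s. Fc i s y > 0 \<and> (\<exists>D. (Tinv i s has_derivative D) (at y) \<and> (\<forall>h. norm (D h) = Fc i s y * norm h))) \<and>
   (\<forall>y\<in>Dom s. \<forall>y'\<in>Dom s. dist (Tinv i s y) (Tinv i s y') \<le> r ^ (2 * length s) * dist y y' \<and>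
       Fc i s y \<le> exp (E (length s) * dist y y') * Fc i s y')"
proof (induction s)
  case Nil
  have e: "Tinv i [] = (\<lambda>y. y)" by (auto simp: Tinv_Nil)
  have "((\<lambda>y. y) has_derivative (\<lambda>h. h)) (at y)" for y :: "real^'n"
    by (rule has_derivative_ident)
  then have "\<exists>D. ((\<lambda>y. y) has_derivative D) (at y) \<and> (\<forall>h. norm (D h) = 1 * norm h)" for y :: "real^'n"
    by fastforce
  then show ?case unfolding e by (auto simp: E_def)
next
  case (Cons a s)
  have sZ: "set s \<subseteq> Z" and aZ: "a \<in> Z" using Cons.prems by auto
  have cond: "s = [] \<or> last s \<noteq> 0" using Cons.prems(2) by auto
  note IH = Cons.IH[OF sZ cond]
  have sub: "Dom (a # s) \<subseteq> Dom s" using Dom_Cons Cons.prems(1) by blast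
  have wnz: "Tinv i s y + a \<noteq> 0" if y: "y \<in> Dom (a # s)" for y
  proof
    assume w: "Tinv i s y + a = 0"
    have ys: "y \<in> Dom s" using y sub by blast
    have "Tinv i s y \<in> K" using Dom_cyl[OF sZ ys] cyl_K by blast
    then have u0: "Tinv i s y = 0" and a0: "a = 0" using K_neg[OF _ aZ w] by auto
    have "set s \<subseteq> {0}" using L2[OF sZ ys u0] by blast
    then have "last (a # s) = 0" using a0 by (cases "s = []") (auto dest: last_in_set)
    then show False using Cons.prems(2) by simp
  qed
  have wbig: "1 \<le> r * norm (Tinv i s y + a)" if y: "y \<in> Dom (a # s)" for y
  proof -
    have "Tinv i (a # s) y \<in> K" using Dom_cyl[OF Cons.prems(1) y] cyl_K by blast
    then have "norm (i (Tinv i s y + a)) \<le> r" using Kr by (simp add: Tinv_Cons)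
    then have "1 / norm (Tinv i s y + a) \<le> r" using inv_norm[OF inv wnz[OF y]] by simp
    then show ?thesis using wnz[OF y] by (simp add: field_simps)
  qed
  have P1: "Fc i (a # s) y > 0 \<and> (\<exists>D. (Tinv i (a # s) has_derivative D) (at y) \<and> (\<forall>h. norm (D h) = Fc i (a # s) y * norm h))"
    if y: "y \<in> Dom (a # s)" for y
  proof -
    have ys: "y \<in> Dom s" using y sub by blast
    obtain D where D: "(Tinv i s has_derivative D) (at y)" and Dn: "\<And>h. norm (D h) = Fc i s y * norm h"
      and Fp: "Fc i s y > 0" using IH ys by blast
    define w where "w = Tinv i s y + a"
    have w0: "w \<noteq> 0" using wnz[OF y] by (simp add: w_def)
    obtain Di where Di: "(i has_derivative Di) (at w)" and Din: "\<And>h. norm (Di h) = norm h / (norm w)^2"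
      using inv_deriv[OF inv w0] by blast
    have sh: "((\<lambda>v. v + a) has_derivative (\<lambda>h. h)) (at (Tinv i s y))"
      by (auto intro!: derivative_eq_intros)
    have "((i \<circ> (\<lambda>v. v + a)) has_derivative (Di \<circ> (\<lambda>h. h))) (at (Tinv i s y))"
      by (rule diff_chain_at[OF sh]) (use Di in \<open>simp add: w_def\<close>)
    then have "((i \<circ> (\<lambda>v. v + a)) \<circ> Tinv i s has_derivative (Di \<circ> (\<lambda>h. h)) \<circ> D) (at y)"
      by (rule diff_chain_at[OF D])
    moreover have "(i \<circ> (\<lambda>v. v + a)) \<circ> Tinv i s = Tinv i (a # s)"
      by (auto simp: Tinv_Cons)
    ultimately have dd': "(Tinv i (a # s) has_derivative (Di \<circ> D)) (at y)" by (simp add: o_def)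
    have "norm ((Di \<circ> D) h) = Fc i (a # s) y * norm h" for h
      by (simp add: Din Dn w_def)
    moreover have "Fc i (a # s) y > 0" using Fp w0 by (simp add: w_def)
    ultimately show ?thesis using dd' by blast
  qed
  have P2: "dist (Tinv i (a # s) y) (Tinv i (a # s) y') \<le> r ^ (2 * length (a # s)) * dist y y' \<and>
       Fc i (a # s) y \<le> exp (E (length (a # s)) * dist y y') * Fc i (a # s) y'"
    if y: "y \<in> Dom (a # s)" and y': "y' \<in> Dom (a # s)" for y y'
  proof -
    have ys: "y \<in> Dom s" and ys': "y' \<in> Dom s" using y y' sub by auto
    define u where "u = Tinv i s y"
    define u' where "u' = Tinv i s y'"
    define w where "w = u + a"
    define w' where "w' = u' + a"
    define n where "n = length s"
    define d where "d = dist y y'"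
    define q where "q = dist u u'"
    have w0: "w \<noteq> 0" and w0': "w' \<noteq> 0" using wnz[OF y] wnz[OF y'] by (auto simp: w_def w'_def u_def u'_def)
    have wb: "1 \<le> r * norm w" and wb': "1 \<le> r * norm w'"
      using wbig[OF y] wbig[OF y'] by (auto simp: w_def w'_def u_def u'_def)
    have nwp: "norm w > 0" "norm w' > 0" using w0 w0' by auto
    have q: "q \<le> r ^ (2 * n) * d" and Fb: "Fc i s y \<le> exp (E n * d) * Fc i s y'"
      using IH ys ys' by (auto simp: q_def u_def u'_def n_def d_def)
    have d0: "d \<ge> 0" "q \<ge> 0" by (auto simp: d_def q_def)
    have dw: "dist w w' = q" by (simp add: w_def w'_def q_def dist_norm)
    have inv1: "1 / (norm w * norm w') \<le> r ^ 2"
    proof -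
      have "1 * 1 \<le> (r * norm w) * (r * norm w')" using wb wb' by (intro mult_mono) auto
      then show ?thesis using nwp by (simp add: field_simps power2_eq_square)
    qed
    have "dist (Tinv i (a # s) y) (Tinv i (a # s) y') = dist w w' / (norm w * norm w')"
      unfolding Tinv_Cons u_def[symmetric] u'_def[symmetric] w_def[symmetric] w'_def[symmetric]
    by (rule inv_dist[OF inv w0 w0'])
    also have "... = q * (1 / (norm w * norm w'))" using dw by simp
    also have "... \<le> q * r ^ 2" using inv1 d0 by (intro mult_left_mono) auto
    also have "... \<le> (r ^ (2 * n) * d) * r ^ 2" using q r0 by (simp add: mult_right_mono)
    also have "... = r ^ (2 * length (a # s)) * d" by (simp add: n_def power_add power_mult algebra_simps power2_eq_square)
    finally have dist_part: "dist (Tinv i (a # s) y) (Tinv i (a # s) y') \<le> r ^ (2 * length (a # s)) * d" .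
    have tri: "norm w' \<le> norm w + q"
    proof -
      have "w' = w + (u' - u)" by (simp add: w_def w'_def)
      then have "norm w' \<le> norm w + norm (u' - u)" by (metis norm_triangle_ineq)
      then show ?thesis by (simp add: q_def dist_norm norm_minus_commute)
    qed
    have ratio: "norm w' / norm w \<le> exp (r * q)"
    proof -
      have "norm w' / norm w \<le> 1 + q / norm w" using tri nwp by (simp add: field_simps)
      also have "q / norm w \<le> r * q"
      proof -
        have "1 / norm w \<le> r" using wb nwp by (simp add: field_simps)
        then show ?thesis using d0 by (simp add: divide_inverse mult.commute mult_left_mono)
      qed
      then have "1 + q / norm w \<le> 1 + r * q" by simp
      also have "... \<le> exp (r * q)" by (rule exp_ge_add_one_self)
      finally show ?thesis by simp
    qed
    have ratio2: "(norm w')^2 / (norm w)^2 \<le> exp (2 * r * r ^ (2 * n) * d)"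
    proof -
      have "(norm w')^2 / (norm w)^2 = (norm w' / norm w)^2" by (simp add: power_divide)
      also have "... \<le> (exp (r * q))^2" using ratio nwp by (intro power_mono) auto
      also have "... = exp (2 * r * q)" by (simp add: exp_double[symmetric] algebra_simps power2_eq_square exp_add[symmetric])
      also have "... \<le> exp (2 * r * r ^ (2 * n) * d)" using q r0 by (simp add: mult_left_mono)
      finally show ?thesis .
    qed
    have Fpos': "Fc i s y' > 0" using IH ys' by blast
    have "Fc i (a # s) y = Fc i s y / (norm w)^2" by (simp add: w_def u_def)
    also have "... \<le> exp (E n * d) * Fc i s y' / (norm w)^2" using Fb nwp by (simp add: divide_right_mono)
    also have "... = exp (E n * d) * Fc i (a # s) y' * ((norm w')^2 / (norm w)^2)"
      using nwp by (simp add: w'_def u'_def field_simps)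
    also have "... \<le> exp (E n * d) * Fc i (a # s) y' * exp (2 * r * r ^ (2 * n) * d)"
      using ratio2 Fpos' nwp by (intro mult_left_mono) (auto simp: w'_def u'_def)
    also have "... = exp (E (length (a # s)) * d) * Fc i (a # s) y'"
      by (simp add: n_def E_Suc exp_add[symmetric] algebra_simps)
    finally show ?thesis using dist_part by (simp add: d_def)
  qed
  show ?case using P1 P2 by blast
qed

end



lemma ereal_bound:
  fixes f :: "'a \<Rightarrow> real"
  assumes Sne: "Sx \<noteq> {}" and f0: "\<And>y. y \<in> Sx \<Longrightarrow> f y \<ge> 0"
    and fb: "\<And>y y'. y \<in> Sx \<Longrightarrow> y' \<in> Sx \<Longrightarrow> f y \<le> M * f y'" and hML: "M \<le> L" and L0: "L > 0"
  shows "(SUP y\<in>Sx. ereal (f y)) \<le> ereal L * (INF y\<in>Sx. ereal (f y))"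
proof -
  obtain y0 where y0: "y0 \<in> Sx" using Sne by blast
  have up: "(SUP y\<in>Sx. ereal (f y)) \<le> ereal (M * f y')" if "y' \<in> Sx" for y'
    by (rule SUP_least) (use fb that in auto)
  have lo: "ereal (f y0) \<le> (SUP y\<in>Sx. ereal (f y))" by (rule SUP_upper) (use y0 in auto)
  obtain m where m: "(SUP y\<in>Sx. ereal (f y)) = ereal m"
    using up[OF y0] lo by (cases "(SUP y\<in>Sx. ereal (f y))") auto
  have mb: "m \<le> M * f y'" if "y' \<in> Sx" for y' using up[OF that] m by simp
  have "ereal (m / L) \<le> (INF y\<in>Sx. ereal (f y))"
  proof (rule INF_greatest)
    fix y' assume y': "y' \<in> Sx"
    have "M * f y' \<le> L * f y'" using hML f0[OF y'] by (simp add: mult_right_mono)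
    then have "m \<le> L * f y'" using mb[OF y'] by simp
    then show "ereal (m / L) \<le> ereal (f y')" using L0 by (simp add: divide_le_eq mult.commute)
  qed
  then have "ereal L * ereal (m / L) \<le> ereal L * (INF y\<in>Sx. ereal (f y))"
    by (rule ereal_mult_left_mono) (use L0 in simp)
  then show ?thesis using m L0 by simp
qed

context S begin

lemma omega_eq:
  assumes "(Tinv i s has_derivative D) (at y)" "\<And>h. norm (D h) = Fc i s y * norm h" "Fc i s y > 0"
  shows "omega i s y = Fc i s y ^ CARD('n)"
proof -
  have "frechet_derivative (Tinv i s) (at y) = D" using frechet_derivative_at[OF assms(1)] by simp
  moreover have "linear D" using assms(1) has_derivative_linear by blast
  ultimately show ?thesis unfolding omega_def using conf_det[OF _ assms(2,3)] by simp
qed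

lemma geo: "(\<Sum>j<n. r ^ (2 * j)) \<le> 1 / (1 - r^2)"
proof -
  have r2: "r^2 < 1" "r^2 \<ge> 0" using r0 r1 by (auto simp: power_less_one_iff abs_less_iff)
  have "(\<Sum>j<n. r ^ (2 * j)) = (\<Sum>j<n. (r^2) ^ j)" by (simp add: power_mult)
  also have "... = (1 - (r^2)^n) / (1 - r^2)" using r2 by (simp add: sum_gp_strict)
  also have "... \<le> 1 / (1 - r^2)" using r2 by (intro divide_right_mono) auto
  finally show ?thesis .
qed

lemma main_bound:
  assumes sZ: "set s \<subseteq> Z" and ne: "cyl i K s \<noteq> {}"
  shows "(SUP y\<in>Dom s. ereal (omega i s y)) \<le> ereal (exp (4 / (1 - r^2)) ^ CARD('n) + 1) * (INF y\<in>Dom s. ereal (omega i s y))"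
proof -
  define L where "L = exp (4 / (1 - r^2)) ^ CARD('n) + 1"
  have r2: "r^2 < 1" using r0 r1 by (auto simp: power_less_one_iff abs_less_iff)
  have M1: "exp (4 / (1 - r^2)) ^ CARD('n) \<ge> 1" using r2 by (intro one_le_power) auto
  have Sne: "Dom s \<noteq> {}" using ne by blast
  show ?thesis
  proof (cases "s \<noteq> [] \<and> last s = 0")
    case True
    then have "Dom s \<subseteq> {0}" using L3 sZ by blast
    then have e: "Dom s = {0}" using Sne subset_singletonD by metis
    show ?thesis unfolding L_def[symmetric]
      by (rule ereal_bound[where M=1]) (use e M1 in \<open>auto simp: L_def omega_def\<close>)
  next
    case False
    then have cond: "s = [] \<or> last s \<noteq> 0" by blast
    note L4' = L4[OF sZ cond]
    have om: "omega i s y = Fc i s y ^ CARD('n)" "Fc i s y > 0" if "y \<in> Dom s" for y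
    proof -
      have "Fc i s y > 0 \<and> (\<exists>D. (Tinv i s has_derivative D) (at y) \<and> (\<forall>h. norm (D h) = Fc i s y * norm h))"
        using bspec[OF conjunct1[OF L4'] that] .
      then obtain D where "Fc i s y > 0" "(Tinv i s has_derivative D) (at y)" "\<And>h. norm (D h) = Fc i s y * norm h"
        by blast
      then show "omega i s y = Fc i s y ^ CARD('n)" "Fc i s y > 0" using omega_eq by auto
    qed
    have Eb: "E (length s) * dist y y' \<le> 4 / (1 - r^2)" if "y \<in> Dom s" "y' \<in> Dom s" for y y'
    proof -
      have "norm y \<le> r" "norm y' \<le> r" using Dom_K[OF sZ] Kr that by auto
      then have d: "dist y y' \<le> 2" using r1 by (smt (verit) dist_norm norm_triangle_ineq4)
      have "E (length s) \<le> 2 * r * (1 / (1 - r^2))" unfolding E_def using geo r0 by (intro mult_left_mono) auto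
      also have "... \<le> 2 * (1 / (1 - r^2))" using r1 r2 by (intro mult_right_mono) auto
      finally have "E (length s) \<le> 2 / (1 - r^2)" by simp
      moreover have "E (length s) \<ge> 0" unfolding E_def using r0 by (intro mult_nonneg_nonneg sum_nonneg) auto
      ultimately have "E (length s) * dist y y' \<le> (2 / (1 - r^2)) * 2"
        using d r2 by (intro mult_mono) auto
      then show ?thesis by simp
    qed
    show ?thesis unfolding L_def[symmetric]
    proof (rule ereal_bound[where M="exp (4 / (1 - r^2)) ^ CARD('n)"])
      show "Dom s \<noteq> {}" by fact
      show "\<And>y. y \<in> Dom s \<Longrightarrow> 0 \<le> omega i s y" by (simp add: omega_def)
      show "exp (4 / (1 - r\<^sup>2)) ^ CARD('n) \<le> L" by (simp add: L_def)
      show "0 < L" using M1 by (simp add: L_def)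
      fix y y' assume y: "y \<in> Dom s" and y': "y' \<in> Dom s"
      have "Fc i s y \<le> exp (E (length s) * dist y y') * Fc i s y'" using bspec[OF bspec[OF conjunct2[OF L4'] y] y'] by (rule conjunct2)
      also have "... \<le> exp (4 / (1 - r^2)) * Fc i s y'"
        using Eb[OF y y'] om(2)[OF y'] by (intro mult_right_mono) auto
      finally have "Fc i s y ^ CARD('n) \<le> (exp (4 / (1 - r^2)) * Fc i s y') ^ CARD('n)"
        using om(2)[OF y] by (intro power_mono) auto
      then show "omega i s y \<le> exp (4 / (1 - r^2)) ^ CARD('n) * omega i s y'"
        using om[OF y] om[OF y'] by (simp add: power_mult_distrib)
    qed
  qed
qed

end



theorem lemma4p3:
  fixes \<iota> :: "real^'n \<Rightarrow> real^'n" and Z K :: "(real^'n) set"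
  assumes "inversion \<iota>" and "cocompact_lattice Z" and "dirichlet_domain Z K"
    and "rad K < 1"
  shows "\<exists>L>1. \<forall>s. set s \<subseteq> Z \<longrightarrow> cyl \<iota> K s \<noteq> {} \<longrightarrow>
    (SUP y\<in>(Tmap \<iota> Z K ^^ length s) ` cyl \<iota> K s. ereal (omega \<iota> s y))
      \<le> ereal L * (INF y\<in>(Tmap \<iota> Z K ^^ length s) ` cyl \<iota> K s. ereal (omega \<iota> s y))"
proof -
  define r where "r = (max (rad K) 0 + 1) / 2"
  obtain C where C: "compact C" and CZ: "\<And>x. \<exists>z\<in>Z. x - z \<in> C"
    using assms(2) unfolding cocompact_lattice_def by blast
  obtain B where B: "\<And>c. c \<in> C \<Longrightarrow> norm c \<le> B"
    using compact_imp_bounded[OF C] unfolding bounded_iff by blast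
  have Kb: "norm x \<le> B" if x: "x \<in> K" for x
  proof -
    obtain z where z: "z \<in> Z" "x - z \<in> C" using CZ by blast
    have "dist x 0 \<le> dist x z" using assms(3) x z unfolding dirichlet_domain_def dirichlet_def by blast
    then show ?thesis using B[OF z(2)] by (simp add: dist_norm)
  qed
  have bdd: "bdd_above (norm ` K)" unfolding bdd_above_def using Kb by blast
  have Kr: "norm x \<le> r" if "x \<in> K" for x
  proof -
    have "norm x \<le> rad K" unfolding rad_def by (rule cSUP_upper[OF that bdd])
    then show ?thesis using assms(4) by (simp add: r_def)
  qed
  interpret S \<iota> Z K r
  proof
    show "inversion \<iota>" by fact
    show "\<And>x y. x \<in> Z \<Longrightarrow> y \<in> Z \<Longrightarrow> x + y \<in> Z" "\<And>x. x \<in> Z \<Longrightarrow> - x \<in> Z"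
      using assms(2) unfolding cocompact_lattice_def by auto
    show "dirichlet_domain Z K" by fact
    show "\<And>x. x \<in> K \<Longrightarrow> norm x \<le> r" by (rule Kr)
    show "0 < r" "r < 1" using assms(4) by (auto simp: r_def)
  qed
  have r2: "r^2 < 1" using r0 r1 by (auto simp: power_less_one_iff abs_less_iff)
  have M1: "exp (4 / (1 - r^2)) ^ CARD('n) \<ge> 1" using r2 by (intro one_le_power) auto
  show ?thesis
    by (rule exI[where x="exp (4 / (1 - r^2)) ^ CARD('n) + 1"]) (use M1 main_bound in auto)
qed


end
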